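(* Let $(X,\mathscr B,\mu,T)$ be a 1-step Markov shift and $\alpha$ its finite time-0 generating partition. Let $c_S^n=2^{-n}$ for all $S\subset n^*$. Then $$\operatorname{Asc}_\mu(X,\alpha,T)=\frac12\sum_{i=1}^\infty\frac1{2^i}H_\mu(\alpha\mid\alpha_i).$$
   Context: A 1-step Markov shift: $X=\mathcal A^{\mathbb Z}$ for a finite alphabet $\mathcal A$, $T$ the shift, $\mu$ the shift-invariant Markov measure determined by a stochastic matrix $P$ and a $P$-fixed probability vector $p$ ($\mu\{x_i=j_0,\dots,x_{i+k}=j_k\}=p_{j_0}P_{j_0j_1}\cdots P_{j_{k-1}j_k}$). The time-0 partition is $\alpha=\{\{x:x_0=a\}:a\in\mathcal A\}$; $\alpha_i=T^{-i}\alpha$, and for $S\subset n^*=\{0,\dots,n-1\}$, $\alpha_S=\bigvee_{i\in S}T^{-i}\alpha$. $H_\mu(\alpha\mid\beta)$ is conditional entropy. $\operatorname{Asc}_\mu(X,\alpha,T)=\lim_{n\to\infty}\frac1n\sum_{S\subset n^*}c_S^nH_\mu(\alpha_S)$. *)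

theory Defs
  imports "HOL-Analysis.Analysis"
begin

text \<open>1-step Markov shift on the alphabet given by a finite type 'a.
  P is the transition matrix, p the stationary vector.\<close>

definition stochastic_matrix :: "('a::finite \<Rightarrow> 'a \<Rightarrow> real) \<Rightarrow> bool" where
  "stochastic_matrix P \<longleftrightarrow> (\<forall>i j. 0 \<le> P i j) \<and> (\<forall>i. (\<Sum>j\<in>UNIV. P i j) = 1)"

definition stationary_prob :: "('a::finite \<Rightarrow> 'a \<Rightarrow> real) \<Rightarrow> ('a \<Rightarrow> real) \<Rightarrow> bool" where
  "stationary_prob P p \<longleftrightarrow> (\<forall>j. 0 \<le> p j) \<and> (\<Sum>j\<in>UNIV. p j) = 1
     \<and> (\<forall>j. (\<Sum>i\<in>UNIV. p i * P i j) = p j)"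

text \<open>Markov measure of the cylinder [x_0 = v 0, ..., x_{n-1} = v (n-1)]
  (by shift invariance this is also the measure of the cylinder at any position).\<close>
definition markov_word :: "('a \<Rightarrow> 'a \<Rightarrow> real) \<Rightarrow> ('a \<Rightarrow> real) \<Rightarrow> nat \<Rightarrow> (nat \<Rightarrow> 'a) \<Rightarrow> real" where
  "markov_word P p n v = (if n = 0 then 1 else p (v 0) * (\<Prod>k<n - 1. P (v k) (v (Suc k))))"

text \<open>Measure of the atom of alpha_S = \<Or>_{i\<in>S} T^{-i} alpha given by w : S \<rightarrow> 'a,
  i.e. mu {x. \<forall>i\<in>S. x_i = w i}, for a finite S \<subseteq> nat.\<close>
definition cyl_prob :: "('a::finite \<Rightarrow> 'a \<Rightarrow> real) \<Rightarrow> ('a \<Rightarrow> real) \<Rightarrow> nat set \<Rightarrow> (nat \<Rightarrow> 'a) \<Rightarrow> real" where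
  "cyl_prob P p S w =
     (let n = (if S = {} then 0 else Suc (Max S)) in
      \<Sum>v \<in> {v \<in> {0..<n} \<rightarrow>\<^sub>E (UNIV::'a set). \<forall>i\<in>S. v i = w i}. markov_word P p n v)"

text \<open>H_mu(alpha_S) (natural logarithm; 0 ln 0 = 0).\<close>
definition part_entropy :: "('a::finite \<Rightarrow> 'a \<Rightarrow> real) \<Rightarrow> ('a \<Rightarrow> real) \<Rightarrow> nat set \<Rightarrow> real" where
  "part_entropy P p S = - (\<Sum>w \<in> S \<rightarrow>\<^sub>E (UNIV::'a set). cyl_prob P p S w * ln (cyl_prob P p S w))"

definition cond_part_entropy :: "('a::finite \<Rightarrow> 'a \<Rightarrow> real) \<Rightarrow> ('a \<Rightarrow> real) \<Rightarrow> nat set \<Rightarrow> nat set \<Rightarrow> real" where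
  "cond_part_entropy P p S R = - (\<Sum>w \<in> (S \<union> R) \<rightarrow>\<^sub>E (UNIV::'a set).
       cyl_prob P p (S \<union> R) w * ln (cyl_prob P p (S \<union> R) w / cyl_prob P p R (restrict w R)))"

end

theory Submission
  imports Defs
begin


lemma cesaro0:
  fixes s :: "nat \<Rightarrow> real"
  assumes "s \<longlonglongrightarrow> 0"
  shows "(\<lambda>n. (1 / real n) * (\<Sum>k<n. s k)) \<longlonglongrightarrow> 0"
proof (rule LIMSEQ_I)
  fix r :: real assume r: "0 < r"
  obtain N where N: "\<And>k. k \<ge> N \<Longrightarrow> \<bar>s k\<bar> < r / 2"
    using assms r unfolding LIMSEQ_iff by (metis half_gt_zero real_norm_def diff_zero)
  define B where "B = (\<Sum>k<N. \<bar>s k\<bar>)"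
  have B0: "0 \<le> B" unfolding B_def by (auto intro: sum_nonneg)
  obtain M :: nat where M: "M > 2 * B / r" using reals_Archimedean2 by blast
  show "\<exists>no. \<forall>n\<ge>no. norm ((1 / real n) * (\<Sum>k<n. s k) - 0) < r"
  proof (intro exI allI impI)
    fix n assume n: "n \<ge> max (Suc N) M"
    have nN: "N \<le> n" and npos: "0 < real n" using n by auto
    have "\<bar>\<Sum>k<n. s k\<bar> \<le> (\<Sum>k<n. \<bar>s k\<bar>)" by (rule sum_abs)
    also have "\<dots> = B + (\<Sum>k\<in>{N..<n}. \<bar>s k\<bar>)"
      unfolding B_def using nN by (metis lessThan_atLeast0 sum.atLeastLessThan_concat zero_le)
    also have "(\<Sum>k\<in>{N..<n}. \<bar>s k\<bar>) \<le> (\<Sum>k\<in>{N..<n}. r / 2)"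
      by (rule sum_mono) (use N in \<open>force intro: less_imp_le\<close>)
    also have "\<dots> \<le> real n * (r / 2)" using r by simp
    finally have le: "\<bar>\<Sum>k<n. s k\<bar> \<le> B + real n * (r / 2)" by simp
    have "2 * B / r < real n" using M n by linarith
    then have "B < real n * (r / 2)" using r by (simp add: field_simps)
    with le have "\<bar>\<Sum>k<n. s k\<bar> < real n * r" by linarith
    then show "norm ((1 / real n) * (\<Sum>k<n. s k) - 0) < r"
      using npos by (simp add: abs_mult field_simps)
  qed
qed

lemma cesaro:
  fixes s :: "nat \<Rightarrow> real"
  assumes "s \<longlonglongrightarrow> L"
  shows "(\<lambda>n. (1 / real n) * (\<Sum>k<n. s k)) \<longlonglongrightarrow> L"
proof -
  have "(\<lambda>k. s k - L) \<longlonglongrightarrow> 0" using assms by (simp add: LIMSEQ_iff)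
  then have a: "(\<lambda>n. (1 / real n) * (\<Sum>k<n. s k - L)) \<longlonglongrightarrow> 0" by (rule cesaro0)
  have b: "(\<lambda>n. (1 / real n) * (\<Sum>k<n. s k - L) + (if n = 0 then 0 else L)) \<longlonglongrightarrow> 0 + L"
    by (intro tendsto_add a) (rule tendsto_eventually, rule eventually_sequentiallyI[of 1], simp)
  have "(1 / real n) * (\<Sum>k<n. s k - L) + (if n = 0 then 0 else L) = (1 / real n) * (\<Sum>k<n. s k)" for n
    by (cases "n = 0") (simp_all add: sum_subtractf field_simps)
  with b show ?thesis by simp
qed

lemma count_max:
  fixes f :: "nat \<Rightarrow> real"
  shows "(\<Sum>S\<in>Pow {0..<n}. if S = {} then 0 else f (Max S)) = (\<Sum>j<n. 2 ^ j * f j)"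
proof (induction n)
  case 0 then show ?case by simp
next
  case (Suc n)
  have d: "Pow {0..<n} \<inter> insert n ` Pow {0..<n} = {}" by auto
  have inj: "inj_on (insert n) (Pow {0..<n})"
    by (rule inj_onI) (metis Pow_iff atLeastLessThan_iff insert_ident less_irrefl subsetD)
  have mx: "S \<in> Pow {0..<n} \<Longrightarrow> Max (insert n S) = n" for S
  proof (rule Max_eqI)
    assume "S \<in> Pow {0..<n}"
    then show "finite (insert n S)" using finite_subset by auto
    fix y assume "y \<in> insert n S" then show "y \<le> n" using \<open>S \<in> Pow {0..<n}\<close> by auto
  qed simp
  have "(\<Sum>S\<in>Pow {0..<Suc n}. if S = {} then 0 else f (Max S))
      = (\<Sum>S\<in>Pow {0..<n}. if S = {} then 0 else f (Max S)) + (\<Sum>S\<in>Pow {0..<n}. f n)"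
    unfolding atLeast0_lessThan_Suc Pow_insert
    by (subst sum.union_disjoint) (auto simp: d sum.reindex[OF inj] mx intro!: sum.cong)
  then show ?case using Suc.IH by (simp add: card_Pow)
qed



lemma sum_PiE_ins:
  fixes F :: "(nat \<Rightarrow> 'a::finite) \<Rightarrow> real"
  assumes "t \<notin> S"
  shows "(\<Sum>w\<in>(insert t S) \<rightarrow>\<^sub>E (UNIV::'a set). F w) = (\<Sum>w\<in>S \<rightarrow>\<^sub>E (UNIV::'a set). \<Sum>b\<in>UNIV. F (w(t:=b)))"
proof -
  have "(\<Sum>w\<in>(insert t S) \<rightarrow>\<^sub>E (UNIV::'a set). F w) = (\<Sum>x\<in>UNIV \<times> (S \<rightarrow>\<^sub>E (UNIV::'a set)). F ((\<lambda>(y, g). g(t := y)) x))"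
    unfolding PiE_insert_eq using inj_combinator[OF assms, of "\<lambda>_. UNIV::'a set"]
    by (subst sum.reindex) auto
  also have "\<dots> = (\<Sum>b\<in>UNIV. \<Sum>w\<in>S \<rightarrow>\<^sub>E (UNIV::'a set). F (w(t:=b)))"
    by (simp add: sum.cartesian_product split_def)
  also have "\<dots> = (\<Sum>w\<in>S \<rightarrow>\<^sub>E (UNIV::'a set). \<Sum>b\<in>UNIV. F (w(t:=b)))"
    by (rule sum.swap)
  finally show ?thesis .
qed

lemma sum_PiE_empty:
  fixes F :: "(nat \<Rightarrow> 'a::finite) \<Rightarrow> real"
  shows "(\<Sum>w\<in>{} \<rightarrow>\<^sub>E (UNIV::'a set). F w) = F (\<lambda>_. undefined)"
  by simp

definition Kf :: "('a::finite \<Rightarrow> 'a \<Rightarrow> real) \<Rightarrow> ('a \<Rightarrow> real) \<Rightarrow> nat \<Rightarrow> nat set \<Rightarrow> (nat \<Rightarrow> 'a) \<Rightarrow> 'a \<Rightarrow> real" where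
  "Kf P p N S w b = (\<Sum>v\<in>{0..<Suc N} \<rightarrow>\<^sub>E (UNIV::'a set).
      if (\<forall>i\<in>S. v i = w i) \<and> v N = b then markov_word P p (Suc N) v else 0)"

definition Cf :: "('a::finite \<Rightarrow> 'a \<Rightarrow> real) \<Rightarrow> ('a \<Rightarrow> real) \<Rightarrow> nat \<Rightarrow> nat set \<Rightarrow> (nat \<Rightarrow> 'a) \<Rightarrow> real" where
  "Cf P p N S w = (\<Sum>v\<in>{0..<N} \<rightarrow>\<^sub>E (UNIV::'a set).
      if (\<forall>i\<in>S. v i = w i) then markov_word P p N v else 0)"

fun Pn :: "('a::finite \<Rightarrow> 'a \<Rightarrow> real) \<Rightarrow> nat \<Rightarrow> 'a \<Rightarrow> 'a \<Rightarrow> real" where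
  "Pn P 0 a b = (if a = b then 1 else 0)"
| "Pn P (Suc k) a b = (\<Sum>l\<in>UNIV. Pn P k a l * P l b)"

lemma cyl_Cf: "cyl_prob P p S w = Cf P p (if S = {} then 0 else Suc (Max S)) S w"
  unfolding cyl_prob_def Cf_def Let_def
  by (subst sum.inter_filter) (auto intro!: finite_PiE)

lemma mw_upd: "markov_word P p (Suc (Suc N)) (v(Suc N := c)) = markov_word P p (Suc N) v * P (v N) c"
  unfolding markov_word_def
  by (simp add: prod.lessThan_Suc mult.assoc)

lemma mw_one: "markov_word P p (Suc 0) v = p (v 0)"
  unfolding markov_word_def by simp

lemma Kf_step:
  fixes P :: "'a::finite \<Rightarrow> 'a \<Rightarrow> real"
  assumes "S \<subseteq> {0..<Suc N}"
  shows "Kf P p (Suc N) S w b = (\<Sum>a\<in>UNIV. Kf P p N S w a * P a b)"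
proof -
  have ns: "Suc N \<notin> S" using assms by auto
  have "Kf P p (Suc N) S w b = (\<Sum>v\<in>{0..<Suc N} \<rightarrow>\<^sub>E (UNIV::'a set). \<Sum>c\<in>UNIV.
      if (\<forall>i\<in>S. (v(Suc N:=c)) i = w i) \<and> c = b then markov_word P p (Suc (Suc N)) (v(Suc N:=c)) else 0)"
    unfolding Kf_def atLeast0_lessThan_Suc[of "Suc N"]
    by (subst sum_PiE_ins) auto
  also have "\<dots> = (\<Sum>v\<in>{0..<Suc N} \<rightarrow>\<^sub>E (UNIV::'a set).
      if (\<forall>i\<in>S. v i = w i) then markov_word P p (Suc N) v * P (v N) b else 0)"
  proof (rule sum.cong[OF refl])
    fix v
    have e: "(\<forall>i\<in>S. (v(Suc N:=c)) i = w i) = (\<forall>i\<in>S. v i = w i)" for c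
      using ns by auto
    show "(\<Sum>c\<in>UNIV. if (\<forall>i\<in>S. (v(Suc N:=c)) i = w i) \<and> c = b then markov_word P p (Suc (Suc N)) (v(Suc N:=c)) else 0)
      = (if (\<forall>i\<in>S. v i = w i) then markov_word P p (Suc N) v * P (v N) b else 0)"
      unfolding e by (cases "\<forall>i\<in>S. v i = w i") (simp add: mw_upd, simp only: simp_thms if_False sum.neutral_const)
  qed
  also have "\<dots> = (\<Sum>v\<in>{0..<Suc N} \<rightarrow>\<^sub>E (UNIV::'a set). \<Sum>a\<in>UNIV.
      (if (\<forall>i\<in>S. v i = w i) \<and> v N = a then markov_word P p (Suc N) v else 0) * P a b)"
  proof (rule sum.cong[OF refl])
    fix v :: "nat \<Rightarrow> 'a"
    show "(if (\<forall>i\<in>S. v i = w i) then markov_word P p (Suc N) v * P (v N) b else 0) =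
      (\<Sum>a\<in>UNIV. (if (\<forall>i\<in>S. v i = w i) \<and> v N = a then markov_word P p (Suc N) v else 0) * P a b)"
    proof (cases "\<forall>i\<in>S. v i = w i")
      case True
      then show ?thesis by (simp add: if_distrib[of "\<lambda>x. x * P _ b"] cong: if_cong)
    next
      case False
      then have "(\<forall>i\<in>S. v i = w i) = False" by blast
      then show ?thesis by (simp only: simp_thms if_False mult_zero_left sum.neutral_const)
    qed
  qed
  also have "\<dots> = (\<Sum>a\<in>UNIV. Kf P p N S w a * P a b)"
    unfolding Kf_def sum_distrib_right by (rule sum.swap)
  finally show ?thesis .
qed

lemma Kf_iter:
  fixes P :: "'a::finite \<Rightarrow> 'a \<Rightarrow> real"
  assumes "S \<subseteq> {0..<Suc N}"
  shows "Kf P p (N + k) S w b = (\<Sum>a\<in>UNIV. Kf P p N S w a * Pn P k a b)"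
proof (induction k arbitrary: b)
  case 0
  then show ?case by (simp add: if_distrib cong: if_cong)
next
  case (Suc k)
  have "Kf P p (N + Suc k) S w b = (\<Sum>c\<in>UNIV. Kf P p (N + k) S w c * P c b)"
    using Kf_step[of S "N+k" P p w b] assms by force
  also have "\<dots> = (\<Sum>c\<in>UNIV. \<Sum>a\<in>UNIV. Kf P p N S w a * Pn P k a c * P c b)"
    by (simp add: Suc.IH sum_distrib_right)
  also have "\<dots> = (\<Sum>a\<in>UNIV. Kf P p N S w a * Pn P (Suc k) a b)"
    by (subst sum.swap) (simp add: sum_distrib_left mult.assoc)
  finally show ?case .
qed

lemma Kf_in: "N \<in> S \<Longrightarrow> Kf P p N S w b = (if b = w N then Cf P p (Suc N) S w else 0)"
  unfolding Kf_def Cf_def by (cases "b = w N") (auto intro!: sum.neutral sum.cong)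

lemma Cf_ins: "Cf P p (Suc N) (insert N S) w = Kf P p N S w (w N)"
  unfolding Kf_def Cf_def by (auto intro!: sum.cong)

lemma Kf0_empty: "Kf P p 0 {} w b = p b"
  unfolding Kf_def
  by (simp add: atLeast0_lessThan_Suc sum_PiE_ins mw_one)

lemma cyl_cong: "(\<And>i. i \<in> S \<Longrightarrow> w i = w' i) \<Longrightarrow> cyl_prob P p S w = cyl_prob P p S w'"
  unfolding cyl_prob_def Let_def by (rule sum.cong) auto

definition xlx :: "real \<Rightarrow> real" where "xlx x = x * ln x"

lemma xlx_mult: "0 \<le> x \<Longrightarrow> 0 \<le> y \<Longrightarrow> xlx (x * y) = y * xlx x + x * xlx y"
  unfolding xlx_def
  by (cases "x = 0 \<or> y = 0") (auto simp: ln_mult algebra_simps)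

definition phi :: "('a::finite \<Rightarrow> 'a \<Rightarrow> real) \<Rightarrow> nat \<Rightarrow> 'a \<Rightarrow> real" where
  "phi P d a = - (\<Sum>b\<in>UNIV. xlx (Pn P d a b))"

definition Gf :: "('a::finite \<Rightarrow> 'a \<Rightarrow> real) \<Rightarrow> ('a \<Rightarrow> real) \<Rightarrow> nat \<Rightarrow> real" where
  "Gf P p d = (\<Sum>a\<in>UNIV. p a * phi P d a)"

lemma part_entropy_xlx: "part_entropy P p S = - (\<Sum>w \<in> S \<rightarrow>\<^sub>E (UNIV::'a::finite set). xlx (cyl_prob P p S w))"
  unfolding part_entropy_def xlx_def ..

context
  fixes P :: "'a::finite \<Rightarrow> 'a \<Rightarrow> real" and p :: "'a \<Rightarrow> real"
  assumes sto: "stochastic_matrix P" and sta: "stationary_prob P p"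
begin

lemma P_nonneg: "0 \<le> P a b" using sto unfolding stochastic_matrix_def by auto
lemma P_row: "(\<Sum>b\<in>UNIV. P a b) = 1" using sto unfolding stochastic_matrix_def by auto
lemma p_nonneg: "0 \<le> p a" using sta unfolding stationary_prob_def by auto
lemma p_sum: "(\<Sum>a\<in>UNIV. p a) = 1" using sta unfolding stationary_prob_def by auto
lemma p_stat: "(\<Sum>a\<in>UNIV. p a * P a b) = p b" using sta unfolding stationary_prob_def by auto

lemma Pn_nonneg: "0 \<le> Pn P k a b"
  by (induction k arbitrary: b) (auto intro!: sum_nonneg mult_nonneg_nonneg P_nonneg)

lemma Pn_row: "(\<Sum>b\<in>UNIV. Pn P k a b) = 1"
proof (induction k)
  case 0 then show ?case by simp
next
  case (Suc k)
  have "(\<Sum>b\<in>UNIV. Pn P (Suc k) a b) = (\<Sum>l\<in>UNIV. Pn P k a l * (\<Sum>b\<in>UNIV. P l b))"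
    by (simp add: sum_distrib_left) (rule sum.swap)
  then show ?case by (simp add: P_row Suc.IH)
qed

lemma Pn_le1: "Pn P k a b \<le> 1"
proof -
  have "Pn P k a b \<le> (\<Sum>b\<in>UNIV. Pn P k a b)"
    by (rule member_le_sum) (auto simp: Pn_nonneg)
  then show ?thesis by (simp add: Pn_row)
qed

lemma Pn_stat: "(\<Sum>a\<in>UNIV. p a * Pn P k a b) = p b"
proof (induction k arbitrary: b)
  case 0 then show ?case by (simp add: if_distrib cong: if_cong)
next
  case (Suc k)
  have "(\<Sum>a\<in>UNIV. p a * Pn P (Suc k) a b) = (\<Sum>l\<in>UNIV. (\<Sum>a\<in>UNIV. p a * Pn P k a l) * P l b)"
    by (simp add: sum_distrib_left sum_distrib_right mult.assoc) (rule sum.swap)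
  then show ?case by (simp add: Suc.IH p_stat)
qed

lemma Kf_empty: "Kf P p k {} w b = p b"
  using Kf_iter[of "{}" 0 P p k w b] by (simp add: Kf0_empty Pn_stat)

lemma cyl_single: "cyl_prob P p {s} w = p (w s)"
  using Cf_ins[of P p s "{}" w] by (simp add: cyl_Cf Kf_empty)

lemma cyl_insert:
  assumes "finite S" "S \<noteq> {}" "Max S < t"
  shows "cyl_prob P p (insert t S) w = cyl_prob P p S w * Pn P (t - Max S) (w (Max S)) (w t)"
proof -
  let ?m = "Max S"
  have tS: "t \<notin> S" using assms Max_ge by fastforce
  have Mx: "Max (insert t S) = t" using assms by (simp add: max_def) (meson Max_in leD)
  have sub: "S \<subseteq> {0..<Suc ?m}" using assms by (auto simp: less_Suc_eq_le)
  have mS: "?m \<in> S" using assms by simp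
  have "cyl_prob P p (insert t S) w = Kf P p t S w (w t)"
    by (simp add: cyl_Cf Mx Cf_ins)
  also have "\<dots> = Kf P p (?m + (t - ?m)) S w (w t)" using assms(3) by (simp del: Max_less_iff)
  also have "\<dots> = (\<Sum>a\<in>UNIV. Kf P p ?m S w a * Pn P (t - ?m) a (w t))"
    by (rule Kf_iter[OF sub])
  also have "\<dots> = Cf P p (Suc ?m) S w * Pn P (t - ?m) (w ?m) (w t)"
  proof -
    have "\<And>a. Kf P p ?m S w a * Pn P (t - ?m) a (w t) = (if a = w ?m then Cf P p (Suc ?m) S w * Pn P (t - ?m) a (w t) else 0)"
      by (simp add: Kf_in[OF mS])
    then show ?thesis by simp
  qed
  finally show ?thesis using assms by (simp add: cyl_Cf)
qed

lemma mw_nonneg: "0 \<le> markov_word P p n v"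
  unfolding markov_word_def by (auto intro!: mult_nonneg_nonneg prod_nonneg p_nonneg P_nonneg)

lemma cyl_nonneg: "0 \<le> cyl_prob P p S w"
  unfolding cyl_prob_def Let_def by (auto intro!: sum_nonneg mw_nonneg)

lemma marginal:
  assumes "finite S" "S \<noteq> {}"
  shows "(\<Sum>w\<in>S \<rightarrow>\<^sub>E (UNIV::'a set). cyl_prob P p S w * f (w (Max S))) = (\<Sum>a\<in>UNIV. p a * f a)"
proof -
  have "\<forall>S f. S \<noteq> {} \<longrightarrow> S \<subseteq> {0..<n} \<longrightarrow>
     (\<Sum>w\<in>S \<rightarrow>\<^sub>E (UNIV::'a set). cyl_prob P p S w * f (w (Max S))) = (\<Sum>a\<in>UNIV. p a * f a)" for n
  proof (induction n)
    case 0 then show ?case by auto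
  next
    case (Suc n)
    show ?case
    proof (intro allI impI)
      fix S :: "nat set" and f :: "'a \<Rightarrow> real"
      assume ne: "S \<noteq> {}" and sub: "S \<subseteq> {0..<Suc n}"
      show "(\<Sum>w\<in>S \<rightarrow>\<^sub>E (UNIV::'a set). cyl_prob P p S w * f (w (Max S))) = (\<Sum>a\<in>UNIV. p a * f a)"
      proof (cases "n \<in> S")
        case False
        then have "S \<subseteq> {0..<n}" using sub by (auto simp: less_Suc_eq)
        then show ?thesis using ne by (intro Suc.IH[rule_format])
      next
        case True
        define S' where "S' = S - {n}"
        have SS: "S = insert n S'" and nS: "n \<notin> S'" using True unfolding S'_def by auto
        have sub': "S' \<subseteq> {0..<n}" using sub unfolding S'_def by (auto simp: less_Suc_eq)
        have fin': "finite S'" using sub' finite_subset by blast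
        show ?thesis
        proof (cases "S' = {}")
          case True
          then show ?thesis unfolding SS
            by (simp add: sum_PiE_ins cyl_single)
        next
          case False
          have mlt: "Max S' < n" using sub' False fin' by auto
          have MS: "Max S = n" unfolding SS using mlt fin' False by (simp add: max_def) (meson Max_in leD)
          have "(\<Sum>w\<in>S \<rightarrow>\<^sub>E (UNIV::'a set). cyl_prob P p S w * f (w (Max S)))
              = (\<Sum>w\<in>S' \<rightarrow>\<^sub>E (UNIV::'a set). \<Sum>b\<in>UNIV. cyl_prob P p S (w(n:=b)) * f b)"
            unfolding MS unfolding SS by (subst sum_PiE_ins[OF nS]) simp
          also have "\<dots> = (\<Sum>w\<in>S' \<rightarrow>\<^sub>E (UNIV::'a set). cyl_prob P p S' w * (\<Sum>b\<in>UNIV. Pn P (n - Max S') (w (Max S')) b * f b))"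
          proof (rule sum.cong[OF refl])
            fix w :: "nat \<Rightarrow> 'a"
            have "cyl_prob P p S (w(n:=b)) = cyl_prob P p S' w * Pn P (n - Max S') (w (Max S')) b" for b
            proof -
              have mS': "Max S' \<in> S'" using fin' False by simp
              have "cyl_prob P p S (w(n:=b)) = cyl_prob P p S' (w(n:=b)) * Pn P (n - Max S') ((w(n:=b)) (Max S')) b"
                unfolding SS by (subst cyl_insert[OF fin' False mlt]) simp
              moreover have "cyl_prob P p S' (w(n:=b)) = cyl_prob P p S' w"
                by (rule cyl_cong) (use nS in auto)
              moreover have "(w(n:=b)) (Max S') = w (Max S')" using mlt by simp
              ultimately show ?thesis by simp
            qed
            then show "(\<Sum>b\<in>UNIV. cyl_prob P p S (w(n:=b)) * f b) = cyl_prob P p S' w * (\<Sum>b\<in>UNIV. Pn P (n - Max S') (w (Max S')) b * f b)"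
              by (simp add: sum_distrib_left mult.assoc)
          qed
          also have "\<dots> = (\<Sum>a\<in>UNIV. p a * (\<Sum>b\<in>UNIV. Pn P (n - Max S') a b * f b))"
            using False sub' by (intro Suc.IH[rule_format])
          also have "\<dots> = (\<Sum>b\<in>UNIV. (\<Sum>a\<in>UNIV. p a * Pn P (n - Max S') a b) * f b)"
            by (simp add: sum_distrib_left sum_distrib_right mult.assoc) (rule sum.swap)
          also have "\<dots> = (\<Sum>a\<in>UNIV. p a * f a)" by (simp add: Pn_stat)
          finally show ?thesis .
        qed
      qed
    qed
  qed
  moreover obtain n where "S \<subseteq> {0..<n}"
    using finite_nat_bounded[OF assms(1)] by (metis atLeast0LessThan)
  ultimately show ?thesis using assms by auto
qed


lemma H_insert:
  assumes fin: "finite S" and ne: "S \<noteq> {}" and lt: "Max S < t"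
  shows "part_entropy P p (insert t S) = part_entropy P p S + Gf P p (t - Max S)"
proof -
  let ?m = "Max S" and ?d = "t - Max S"
  have tS: "t \<notin> S" using fin lt Max_ge by fastforce
  have c: "cyl_prob P p (insert t S) (w(t:=b)) = cyl_prob P p S w * Pn P ?d (w ?m) b" for w b
  proof -
    have "cyl_prob P p (insert t S) (w(t:=b)) = cyl_prob P p S (w(t:=b)) * Pn P ?d ((w(t:=b)) ?m) b"
      by (subst cyl_insert[OF fin ne lt]) simp
    moreover have "cyl_prob P p S (w(t:=b)) = cyl_prob P p S w"
      by (rule cyl_cong) (use tS in auto)
    moreover have "(w(t:=b)) ?m = w ?m" using lt by simp
    ultimately show ?thesis by simp
  qed
  have "part_entropy P p (insert t S) = - (\<Sum>w\<in>S \<rightarrow>\<^sub>E (UNIV::'a set). \<Sum>b\<in>UNIV. xlx (cyl_prob P p S w * Pn P ?d (w ?m) b))"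
    unfolding part_entropy_xlx by (subst sum_PiE_ins[OF tS]) (simp add: c)
  also have "\<dots> = - (\<Sum>w\<in>S \<rightarrow>\<^sub>E (UNIV::'a set). xlx (cyl_prob P p S w) - cyl_prob P p S w * phi P ?d (w ?m))"
  proof -
    have "(\<Sum>b\<in>UNIV. xlx (cyl_prob P p S w * Pn P ?d (w ?m) b)) = xlx (cyl_prob P p S w) - cyl_prob P p S w * phi P ?d (w ?m)" for w
      by (simp add: xlx_mult cyl_nonneg Pn_nonneg sum.distrib sum_distrib_left[symmetric] sum_distrib_right[symmetric] Pn_row phi_def)
    then show ?thesis by simp
  qed
  also have "\<dots> = part_entropy P p S + (\<Sum>w\<in>S \<rightarrow>\<^sub>E (UNIV::'a set). cyl_prob P p S w * phi P ?d (w ?m))"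
    unfolding part_entropy_xlx sum_subtractf by simp
  also have "\<dots> = part_entropy P p S + Gf P p ?d"
    by (simp add: marginal[OF fin ne] Gf_def)
  finally show ?thesis .
qed

lemma H_single: "part_entropy P p {s} = - (\<Sum>a\<in>UNIV. xlx (p a))"
  unfolding part_entropy_xlx by (simp add: sum_PiE_ins cyl_single)

lemma cond_G:
  assumes "0 < d"
  shows "cond_part_entropy P p {0} {d} = Gf P p d"
proof -
  have e: "{0} \<union> {d} = insert d (insert 0 {})" by auto
  have nd: "d \<notin> {0}" using assms by simp
  have key: "xy * ln (xy / z) = y * xlx x + x * xlx y - xy * ln z"
    if "xy = x * y" "0 \<le> x" "0 \<le> y" "xy > 0 \<Longrightarrow> z > 0" for x y z xy :: real
  proof (cases "xy = 0")
    case True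
    then have "x = 0 \<or> y = 0" using that by simp
    then show ?thesis using True by (auto simp: xlx_def)
  next
    case False
    then have "x > 0" "y > 0" "z > 0" using that by (auto simp: less_le)
    then show ?thesis using that by (simp add: xlx_def ln_div ln_mult algebra_simps)
  qed
  have zpos: "p a * Pn P d a b > 0 \<Longrightarrow> p b > 0" for a b
  proof -
    have "p a * Pn P d a b \<le> (\<Sum>a\<in>UNIV. p a * Pn P d a b)"
      by (rule member_le_sum) (auto intro: mult_nonneg_nonneg p_nonneg Pn_nonneg)
    then show "p a * Pn P d a b > 0 \<Longrightarrow> p b > 0" by (simp add: Pn_stat)
  qed
  let ?u = "(\<lambda>_. undefined) :: nat \<Rightarrow> 'a"
  have c2: "cyl_prob P p (insert d {0}) (?u(0:=a, d:=b)) = p a * Pn P d a b" for a b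
    using assms by (subst cyl_insert) (auto simp: cyl_single)
  have c1: "cyl_prob P p {d} (restrict (?u(0:=a, d:=b)) {d}) = p b" for a b
    by (simp add: cyl_single)
  have "cond_part_entropy P p {0} {d} = - (\<Sum>a\<in>UNIV. \<Sum>b\<in>UNIV.
      (p a * Pn P d a b) * ln ((p a * Pn P d a b) / p b))"
    unfolding cond_part_entropy_def e
    apply (subst sum_PiE_ins[OF nd])
    apply (subst sum_PiE_ins[of 0 "{}"], simp)
    apply (simp only: c1 c2 sum_PiE_empty)
    done
  also have "\<dots> = - (\<Sum>a\<in>UNIV. \<Sum>b\<in>UNIV. Pn P d a b * xlx (p a) + p a * xlx (Pn P d a b) - (p a * Pn P d a b) * ln (p b))"
    by (intro arg_cong[where f=uminus] sum.cong refl key) (auto simp: p_nonneg Pn_nonneg zpos)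
  also have "\<dots> = - (\<Sum>a\<in>UNIV. xlx (p a)) + Gf P p d + (\<Sum>b\<in>UNIV. (\<Sum>a\<in>UNIV. p a * Pn P d a b) * ln (p b))"
  proof -
    have h1: "(\<Sum>a\<in>UNIV. \<Sum>b\<in>UNIV. Pn P d a b * xlx (p a)) = (\<Sum>a\<in>UNIV. xlx (p a))"
      by (simp add: sum_distrib_right[symmetric] Pn_row)
    have h2: "(\<Sum>a\<in>UNIV. \<Sum>b\<in>UNIV. p a * Pn P d a b * ln (p b)) = (\<Sum>b\<in>UNIV. (\<Sum>a\<in>UNIV. p a * Pn P d a b) * ln (p b))"
      by (subst sum.swap) (simp add: sum_distrib_right)
    show ?thesis
      by (simp add: sum.distrib sum_subtractf h1 h2 sum_distrib_left[symmetric] Gf_def phi_def sum_negf)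
  qed
  also have "\<dots> = Gf P p d"
    by (simp add: Pn_stat xlx_def)
  finally show ?thesis .
qed


lemma H_empty: "part_entropy P p {} = 0"
  unfolding part_entropy_def by (simp add: cyl_prob_def markov_word_def)

lemma H_ins_gen:
  assumes "S \<subseteq> {0..<n}"
  shows "part_entropy P p (insert n S) = part_entropy P p S + (if S = {} then - (\<Sum>a\<in>UNIV. xlx (p a)) else Gf P p (n - Max S))"
proof (cases "S = {}")
  case True then show ?thesis by (simp add: H_single H_empty)
next
  case False
  have fin: "finite S" using assms finite_subset by blast
  have "Max S < n" using assms False fin by auto
  then show ?thesis using H_insert[OF fin False] False by simp
qed

lemma E_rec:
  "(\<Sum>S\<in>Pow {0..<Suc n}. part_entropy P p S) = 2 * (\<Sum>S\<in>Pow {0..<n}. part_entropy P p S)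
     - (\<Sum>a\<in>UNIV. xlx (p a)) + (\<Sum>j<n. 2 ^ j * Gf P p (n - j))"
proof -
  let ?H0 = "- (\<Sum>a\<in>UNIV. xlx (p a))"
  have d: "Pow {0..<n} \<inter> insert n ` Pow {0..<n} = {}" by auto
  have inj: "inj_on (insert n) (Pow {0..<n})"
    by (rule inj_onI) (metis Pow_iff atLeastLessThan_iff insert_ident less_irrefl subsetD)
  have "(\<Sum>S\<in>Pow {0..<Suc n}. part_entropy P p S)
      = (\<Sum>S\<in>Pow {0..<n}. part_entropy P p S) + (\<Sum>S\<in>Pow {0..<n}. part_entropy P p (insert n S))"
    unfolding atLeast0_lessThan_Suc Pow_insert
    by (subst sum.union_disjoint) (auto simp: d sum.reindex[OF inj])
  also have "(\<Sum>S\<in>Pow {0..<n}. part_entropy P p (insert n S))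
     = (\<Sum>S\<in>Pow {0..<n}. part_entropy P p S + ((if S = {} then ?H0 else 0) + (if S = {} then 0 else Gf P p (n - Max S))))"
    by (intro sum.cong refl) (simp add: H_ins_gen)
  also have "\<dots> = (\<Sum>S\<in>Pow {0..<n}. part_entropy P p S) + ?H0 + (\<Sum>j<n. 2 ^ j * Gf P p (n - j))"
    using count_max[of "\<lambda>j. Gf P p (n - j)" n]
    by (simp add: sum.distrib)
  finally show ?thesis by simp
qed

lemma xlx_bounds: "0 \<le> x \<Longrightarrow> x \<le> 1 \<Longrightarrow> -1 \<le> xlx x \<and> xlx x \<le> 0"
proof -
  assume x: "0 \<le> x" "x \<le> 1"
  show ?thesis
  proof (cases "x = 0")
    case True then show ?thesis by (simp add: xlx_def)
  next
    case False
    then have xp: "0 < x" using x by simp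
    have "ln (1 / x) \<le> 1 / x - 1" using xp by (intro ln_le_minus_one) simp
    then have "- ln x \<le> 1 / x - 1" using xp by (simp add: ln_div)
    then have "x * (- ln x) \<le> x * (1 / x - 1)" using xp by (intro mult_left_mono) auto
    then have "x - 1 \<le> x * ln x" using xp by (simp add: algebra_simps)
    moreover have "x * ln x \<le> 0" using xp x by (simp add: mult_nonneg_nonpos)
    ultimately show ?thesis using x unfolding xlx_def by simp
  qed
qed

lemma Gf_bounds: "0 \<le> Gf P p d \<and> Gf P p d \<le> real CARD('a)"
proof -
  have ph: "0 \<le> phi P d a \<and> phi P d a \<le> real CARD('a)" for a
  proof -
    have "(\<Sum>b\<in>UNIV. xlx (Pn P d a b)) \<le> 0"
      by (rule sum_nonpos) (use xlx_bounds Pn_nonneg Pn_le1 in blast)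
    moreover have "(\<Sum>b\<in>(UNIV::'a set). -1) \<le> (\<Sum>b\<in>UNIV. xlx (Pn P d a b))"
      by (rule sum_mono) (use xlx_bounds Pn_nonneg Pn_le1 in blast)
    ultimately show ?thesis unfolding phi_def by simp
  qed
  have "0 \<le> Gf P p d" unfolding Gf_def
    by (intro sum_nonneg mult_nonneg_nonneg p_nonneg) (use ph in blast)
  moreover have "Gf P p d \<le> (\<Sum>a\<in>UNIV. p a * real CARD('a))" unfolding Gf_def
    by (intro sum_mono mult_left_mono p_nonneg) (use ph in blast)
  ultimately show ?thesis by (simp add: sum_distrib_right[symmetric] p_sum)
qed

lemma e_closed:
  "(\<Sum>S\<in>Pow {0..<n}. part_entropy P p S) / 2 ^ n
   = (\<Sum>k<n. - (\<Sum>a\<in>UNIV. xlx (p a)) / 2 ^ Suc k + (\<Sum>i<k. Gf P p (Suc i) / 2 ^ (i + 2)))"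
proof (induction n)
  case 0 then show ?case by (simp add: H_empty)
next
  case (Suc n)
  let ?H0 = "- (\<Sum>a\<in>UNIV. xlx (p a))"
  have r: "(\<Sum>j<n. 2 ^ j * Gf P p (n - j)) / 2 ^ Suc n = (\<Sum>i<n. Gf P p (Suc i) / 2 ^ (i + 2))"
  proof -
    have "(\<Sum>j<n. 2 ^ j * Gf P p (n - j)) / 2 ^ Suc n = (\<Sum>j<n. 2 ^ j * Gf P p (n - j) / 2 ^ Suc n)"
      by (simp add: sum_divide_distrib)
    also have "\<dots> = (\<Sum>i<n. 2 ^ (n - Suc i) * Gf P p (n - (n - Suc i)) / 2 ^ Suc n)"
      by (rule sum.nat_diff_reindex[symmetric])
    also have "\<dots> = (\<Sum>i<n. Gf P p (Suc i) / 2 ^ (i + 2))"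
    proof (rule sum.cong[OF refl])
      fix i assume "i \<in> {..<n}"
      then have i: "i < n" by simp
      have "(2::real) ^ Suc n = 2 ^ (n - Suc i) * 2 ^ (i + 2)"
      proof -
        have "n - Suc i + (i + 2) = Suc n" using i by simp
        then show ?thesis by (metis power_add)
      qed
      moreover have "n - (n - Suc i) = Suc i" using i by simp
      ultimately show "2 ^ (n - Suc i) * Gf P p (n - (n - Suc i)) / 2 ^ Suc n = Gf P p (Suc i) / 2 ^ (i + 2)"
        by simp
    qed
    finally show ?thesis .
  qed
  have "(\<Sum>S\<in>Pow {0..<Suc n}. part_entropy P p S) / 2 ^ Suc n
     = (\<Sum>S\<in>Pow {0..<n}. part_entropy P p S) / 2 ^ n + ?H0 / 2 ^ Suc n
       + (\<Sum>j<n. 2 ^ j * Gf P p (n - j)) / 2 ^ Suc n"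
    by (simp add: E_rec add_divide_distrib diff_divide_distrib)
  then show ?case using Suc.IH r by simp
qed


lemma main:
  "summable (\<lambda>i. (1 / 2 ^ Suc i) * cond_part_entropy P p {0} {Suc i})
    \<and> (\<lambda>n. (1 / real n) * (\<Sum>S\<in>Pow {0..<n}. (1 / 2 ^ n) * part_entropy P p S))
        \<longlonglongrightarrow> (1/2) * (\<Sum>i. (1 / 2 ^ Suc i) * cond_part_entropy P p {0} {Suc i})"
proof -
  define a where "a i = Gf P p (Suc i) / 2 ^ (i + 2)" for i
  define H0 where "H0 = - (\<Sum>a\<in>UNIV. xlx (p a))"
  have suma: "summable a"
  proof (rule summable_comparison_test')
    show "summable (\<lambda>i. real CARD('a) * (1/2) ^ i)"
      by (intro summable_mult summable_geometric) simp
    fix i :: nat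
    have "a i \<le> real CARD('a) / 2 ^ (i + 2)" unfolding a_def
      using Gf_bounds[of "Suc i"] by (intro divide_right_mono) auto
    also have "\<dots> \<le> real CARD('a) / 2 ^ i"
      by (intro divide_left_mono) (auto simp: power_increasing)
    finally show "norm (a i) \<le> real CARD('a) * (1/2) ^ i"
      using Gf_bounds[of "Suc i"] by (simp add: a_def power_divide)
  qed
  have trm: "(1 / 2 ^ Suc i) * cond_part_entropy P p {0} {Suc i} = 2 * a i" for i
    by (simp add: cond_G a_def)
  have s1: "summable (\<lambda>i. (1 / 2 ^ Suc i) * cond_part_entropy P p {0} {Suc i})"
    unfolding trm by (intro summable_mult suma)
  have s2: "(1/2) * (\<Sum>i. (1 / 2 ^ Suc i) * cond_part_entropy P p {0} {Suc i}) = suminf a"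
    unfolding trm by (simp add: suminf_mult suma)
  have seq: "(1 / real n) * (\<Sum>S\<in>Pow {0..<n}. (1 / 2 ^ n) * part_entropy P p S)
     = (1 / real n) * (\<Sum>k<n. H0 / 2 ^ Suc k) + (1 / real n) * (\<Sum>k<n. \<Sum>i<k. a i)" for n
  proof -
    have "(\<Sum>S\<in>Pow {0..<n}. (1 / 2 ^ n) * part_entropy P p S) = (\<Sum>S\<in>Pow {0..<n}. part_entropy P p S) / 2 ^ n"
      by (simp add: sum_divide_distrib)
    also have "\<dots> = (\<Sum>k<n. H0 / 2 ^ Suc k) + (\<Sum>k<n. \<Sum>i<k. a i)"
      unfolding e_closed by (simp only: sum.distrib H0_def a_def)
    finally show ?thesis by (simp add: distrib_left)
  qed
  have gs: "summable (\<lambda>k. H0 / 2 ^ Suc k)"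
    using summable_mult[OF summable_geometric[of "1/2::real"], of "H0/2"] by (simp add: power_divide)
  have l1: "(\<lambda>n. (1 / real n) * (\<Sum>k<n. H0 / 2 ^ Suc k)) \<longlonglongrightarrow> 0 * (\<Sum>k. H0 / 2 ^ Suc k)"
    by (intro tendsto_mult lim_inverse_n' summable_LIMSEQ gs)
  have l2: "(\<lambda>n. (1 / real n) * (\<Sum>k<n. \<Sum>i<k. a i)) \<longlonglongrightarrow> suminf a"
    by (intro cesaro summable_LIMSEQ suma)
  have "(\<lambda>n. (1 / real n) * (\<Sum>k<n. H0 / 2 ^ Suc k) + (1 / real n) * (\<Sum>k<n. \<Sum>i<k. a i)) \<longlonglongrightarrow> 0 * (\<Sum>k. H0 / 2 ^ Suc k) + suminf a"
    by (intro tendsto_add l1 l2)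
  then show ?thesis using s1 s2 seq by simp
qed

end


theorem proposition5p10:
  fixes P :: "'a::finite \<Rightarrow> 'a \<Rightarrow> real" and p :: "'a \<Rightarrow> real"
  assumes "stochastic_matrix P" and "stationary_prob P p"
  shows "summable (\<lambda>i. (1 / 2 ^ Suc i) * cond_part_entropy P p {0} {Suc i})
    \<and> (\<lambda>n. (1 / real n) * (\<Sum>S\<in>Pow {0..<n}. (1 / 2 ^ n) * part_entropy P p S))
        \<longlonglongrightarrow> (1/2) * (\<Sum>i. (1 / 2 ^ Suc i) * cond_part_entropy P p {0} {Suc i})"
  by (rule main[OF assms])

end
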